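(* Let $X$ be a (real or complex) separable infinite-dimensional F-space and $T:X\to X$ a continuous linear operator that is quasi-rigid. Then the set $\mathrm{Rec}(T)$ of recurrent vectors of $T$ contains a dense infinite-dimensional vector subspace of $X$.
   Context: An F-space is a completely metrizable topological vector space. $x$ is recurrent for $T$ if $x\in\overline{\{T^nx:n\geq1\}}$; $\mathrm{Rec}(T)$ is the set of such $x$. $T$ is quasi-rigid if there exist a strictly increasing sequence $(n_k)$ of positive integers and a dense $Y\subset X$ with $T^{n_k}x\to x$ for every $x\in Y$. *)

theory Defs
  imports "HOL-Analysis.Analysis"
begin

text \<open>An F-space over the scalar field 'k (in the paper: the reals or the complex numbers):
  a vector space (with scalar multiplication smult_op) whose topology makes addition and
  scalar multiplication jointly continuous and is completely metrizable.\<close>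
definition F_space :: "('k::real_normed_field \<Rightarrow> 'a::{ab_group_add,topological_space} \<Rightarrow> 'a) \<Rightarrow> bool" where
  "F_space smult_op \<longleftrightarrow>
     vector_space smult_op \<and>
     continuous_on UNIV (\<lambda>(x::'a, y::'a). x + y) \<and>
     continuous_on UNIV (\<lambda>(c::'k, x::'a). smult_op c x) \<and>
     completely_metrizable_space (euclidean :: 'a topology)"

definition Rec :: "('a::topological_space \<Rightarrow> 'a) \<Rightarrow> 'a set" where
  "Rec T = {x. x \<in> closure {(T ^^ n) x | n. n \<ge> 1}}"

definition quasi_rigid :: "('a::topological_space \<Rightarrow> 'a) \<Rightarrow> bool" where
  "quasi_rigid T \<longleftrightarrow>
     (\<exists>(n::nat \<Rightarrow> nat) Y. strict_mono n \<and> (\<forall>k. n k \<ge> 1) \<and> closure Y = UNIV \<and>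
        (\<forall>x\<in>Y. ((\<lambda>k. (T ^^ n k) x) \<longlongrightarrow> x) sequentially))"

end

theory Submission
  imports Defs
begin



datatype 'a cx = Cx (re: 'a) (im: 'a)

instantiation cx :: (comm_ring_1) comm_ring_1
begin
definition "0 = Cx 0 0"
definition "1 = Cx 1 0"
definition "u + v = Cx (re u + re v) (im u + im v)"
definition "u - v = Cx (re u - re v) (im u - im v)"
definition "- u = Cx (- re u) (- im u)"
definition "u * v = Cx (re u * re v - im u * im v) (re u * im v + im u * re v)"
instance
  by standard (auto simp: zero_cx_def one_cx_def plus_cx_def minus_cx_def uminus_cx_def times_cx_def
      algebra_simps intro: cx.expand)
end

lemma cx_simps [simp]:
  "re 0 = 0" "im 0 = 0" "re 1 = 1" "im 1 = 0"
  "re (u + v) = re u + re v" "im (u + v) = im u + im v"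
  "re (u - v) = re u - re v" "im (u - v) = im u - im v"
  "re (- u) = - re u" "im (- u) = - im u"
  "re (u * v) = re u * re v - im u * im v" "im (u * v) = re u * im v + im u * re v"
  by (simp_all add: zero_cx_def one_cx_def plus_cx_def minus_cx_def uminus_cx_def times_cx_def)

definition hc :: "complex \<Rightarrow> 'k::real_normed_field cx" where
  "hc z = Cx (of_real (Re z)) (of_real (Im z))"

definition cj :: "'k::comm_ring_1 cx \<Rightarrow> 'k cx" where
  "cj u = Cx (re u) (- im u)"

definition Nc :: "'k::real_normed_field cx \<Rightarrow> real" where
  "Nc u = norm (re u) + norm (im u)"

lemma hc_simps [simp]: "re (hc z) = of_real (Re z)" "im (hc z) = of_real (Im z)"
  by (simp_all add: hc_def)

lemma cj_simps [simp]: "re (cj u) = re u" "im (cj u) = - im u"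
  by (simp_all add: cj_def)

lemma hc_mult: "hc (z * w) = (hc z * hc w :: 'k::real_normed_field cx)"
  by (rule cx.expand) (simp add: algebra_simps)
lemma hc_add: "hc (z + w) = (hc z + hc w :: 'k::real_normed_field cx)"
  by (rule cx.expand) (simp add: algebra_simps)
lemma hc_minus: "hc (- z) = (- hc z :: 'k::real_normed_field cx)"
  by (rule cx.expand) (simp add: algebra_simps)
lemma hc_one: "hc 1 = (1 :: 'k::real_normed_field cx)"
  by (rule cx.expand) simp
lemma hc_power: "hc (z ^ n) = (hc z ^ n :: 'k::real_normed_field cx)"
  by (induction n) (simp_all add: hc_one hc_mult)

lemma cj_mult: "cj (u * v) = cj u * cj (v :: 'k::comm_ring_1 cx)"
  by (rule cx.expand) (simp add: algebra_simps)
lemma cj_diff: "cj (u - v) = cj u - cj (v :: 'k::comm_ring_1 cx)"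
  by (rule cx.expand) (simp add: algebra_simps)
lemma cj_one: "cj 1 = (1 :: 'k::comm_ring_1 cx)"
  by (rule cx.expand) simp
lemma cj_power: "cj (u ^ n) = cj u ^ n" for u :: "'k::comm_ring_1 cx"
  by (induction n) (simp_all add: cj_one cj_mult)
lemma cj_cj: "cj (cj u) = (u :: 'k::comm_ring_1 cx)"
  by (rule cx.expand) simp
lemma cj_hc: "cj (hc z) = (hc (cnj z) :: 'k::real_normed_field cx)"
  by (rule cx.expand) simp
lemma cj_real: "cj (Cx a 0) = (Cx a 0 :: 'k::comm_ring_1 cx)"
  by (rule cx.expand) simp

lemma Nc_nonneg: "Nc u \<ge> 0"
  by (simp add: Nc_def)
lemma Nc_mult: "Nc (u * v) \<le> Nc u * Nc v"
proof -
  have "norm (re u * re v - im u * im v) \<le> norm (re u) * norm (re v) + norm (im u) * norm (im v)"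
    by (metis norm_mult norm_triangle_ineq4)
  moreover have "norm (re u * im v + im u * re v) \<le> norm (re u) * norm (im v) + norm (im u) * norm (re v)"
    by (metis norm_mult norm_triangle_ineq)
  ultimately show ?thesis by (simp add: Nc_def algebra_simps)
qed
lemma Nc_add: "Nc (u + v) \<le> Nc u + Nc v"
  using norm_triangle_ineq[of "re u" "re v"] norm_triangle_ineq[of "im u" "im v"]
  by (simp add: Nc_def)
lemma Nc_diff: "Nc (u - v) \<le> Nc u + Nc v"
  using norm_triangle_ineq4[of "re u" "re v"] norm_triangle_ineq4[of "im u" "im v"]
  by (simp add: Nc_def)
lemma Nc_one: "Nc (1::'k::real_normed_field cx) = 1"
  by (simp add: Nc_def)
lemma Nc_power: "Nc (u ^ n) \<le> Nc u ^ n"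
proof (induction n)
  case 0 then show ?case by (simp add: Nc_one)
next
  case (Suc n)
  have "Nc (u ^ Suc n) \<le> Nc u * Nc (u ^ n)" by (simp add: Nc_mult)
  also have "\<dots> \<le> Nc u * Nc u ^ n" using Suc Nc_nonneg[of u] by (rule mult_left_mono)
  finally show ?case by simp
qed
lemma Nc_cj: "Nc (cj u) = Nc u"
  by (simp add: Nc_def)
lemma Nc_hc: "Nc (hc z :: 'k::real_normed_field cx) \<le> 2 * cmod z"
  using abs_Re_le_cmod[of z] abs_Im_le_cmod[of z] by (simp add: Nc_def)
lemma Nc_real: "Nc (Cx a 0) = norm a"
  by (simp add: Nc_def)
lemma re_le_Nc: "norm (re u) \<le> Nc u"
  by (simp add: Nc_def)

lemma real_mult: "Cx a 0 * Cx b 0 = (Cx (a * b) 0 :: 'k::comm_ring_1 cx)"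
  by (rule cx.expand) simp
lemma real_power: "Cx a 0 ^ n = (Cx (a ^ n) 0 :: 'k::comm_ring_1 cx)"
  by (induction n) (simp_all add: real_mult, simp add: one_cx_def)

definition qq :: "'k::real_normed_field \<Rightarrow> complex \<Rightarrow> 'k" where
  "qq a z = a * a - of_real (2 * Re z) * a + of_real ((Re z)\<^sup>2 + (Im z)\<^sup>2)"

lemma qq_factor: "(Cx a 0 - hc z) * (Cx a 0 - hc (cnj z)) = Cx (qq a z) 0"
  by (rule cx.expand) (simp add: qq_def algebra_simps power2_eq_square)




lemma mazur_local:
  fixes a :: "'k::real_normed_field" and w \<mu> :: complex
  assumes minw: "\<And>z. norm (qq a w) \<le> norm (qq a z)"
    and r: "r = norm (qq a w)" "r > 0"
    and M: "M = norm a + \<bar>Re w\<bar> + \<bar>Im w\<bar> + 1"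
    and mu1: "cmod \<mu> < sqrt r" and mu2: "cmod \<mu> * M < r"
  shows "norm (qq a (w + \<mu>)) \<le> r"
proof -
  define Y :: "'k cx" where "Y = Cx a 0 - hc w"
  define D where "D = (\<lambda>\<mu> N. Y ^ N - hc (\<mu> ^ N))"
  define L where "L = (\<lambda>\<mu> N. D \<mu> N * cj (D \<mu> N))"
  define g where "g = (\<lambda>z. norm (qq a z))"
  have gr: "g z \<ge> r" for z using minw r by (simp add: g_def)
  have cjY: "cj Y = Cx a 0 - hc (cnj w)"
    by (simp add: Y_def cj_diff cj_hc cj_real)
  have imL: "im (L \<nu> N) = 0" for \<nu> N
  proof -
    have "cj (L \<nu> N) = L \<nu> N" by (simp add: L_def cj_mult cj_cj mult.commute)
    then have "- im (L \<nu> N) = im (L \<nu> N)" by (metis cj_simps(2))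
    then show ?thesis by simp
  qed
  have L1: "re (L \<nu> 1) = qq a (w + \<nu>)" for \<nu>
  proof -
    have d: "D \<nu> 1 = Cx a 0 - hc (w + \<nu>)" by (simp add: D_def Y_def hc_add)
    have c: "cj (Cx a 0 - hc (w + \<nu>)) = Cx a 0 - hc (cnj (w + \<nu>))"
      by (simp only: cj_diff cj_hc cj_real)
    have e: "L \<nu> 1 = Cx (qq a (w + \<nu>)) 0"
      by (simp only: L_def d c qq_factor)
    show ?thesis by (simp only: e cx.sel)
  qed
  have L2: "re (L \<nu> (2 * N)) = re (L \<nu> N) * re (L (\<zeta> * \<nu>) N)" if z: "\<zeta> ^ N = -1" for \<nu> \<zeta> N
  proof -
    have hm: "hc ((\<zeta> * \<nu>) ^ N) = - hc (\<nu> ^ N)"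
      by (simp add: power_mult_distrib z hc_minus)
    have p1: "Y ^ (2 * N) = (Y ^ N) ^ 2" by (simp add: power_mult[symmetric] mult.commute)
    have p2: "hc (\<nu> ^ (2 * N)) = hc (\<nu> ^ N) ^ 2"
      by (simp add: power_mult[symmetric] mult.commute hc_power[symmetric])
    have "D \<nu> (2 * N) = D \<nu> N * D (\<zeta> * \<nu>) N"
      unfolding D_def p1 p2 hm by (simp add: algebra_simps power2_eq_square)
    then have "L \<nu> (2 * N) = L \<nu> N * L (\<zeta> * \<nu>) N"
      by (simp add: L_def cj_mult mult_ac)
    then show ?thesis using imL by simp
  qed
  have L3: "g (w + \<nu>) * r ^ (2 ^ m - 1) \<le> norm (re (L \<nu> (2 ^ m)))" for m \<nu>
  proof (induction m arbitrary: \<nu>)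
    case 0 then show ?case using L1[of \<nu>] by (simp add: g_def)
  next
    case (Suc m)
    define N :: nat where "N = 2 ^ m"
    have N1: "N \<ge> 1" by (simp add: N_def)
    define \<zeta> where "\<zeta> = cis (pi / real N)"
    have z: "\<zeta> ^ N = -1" using N1 by (simp add: \<zeta>_def Complex.DeMoivre)
    have IH1: "g (w + \<nu>) * r ^ (N - 1) \<le> norm (re (L \<nu> N))" using Suc N_def by simp
    have IH2: "g (w + \<zeta> * \<nu>) * r ^ (N - 1) \<le> norm (re (L (\<zeta> * \<nu>) N))" using Suc N_def by simp
    have "r * r ^ (N - 1) \<le> g (w + \<zeta> * \<nu>) * r ^ (N - 1)"
      using gr r by (simp add: mult_right_mono)
    with IH2 have IH2': "r ^ N \<le> norm (re (L (\<zeta> * \<nu>) N))"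
      using N1 by (metis (no_types, lifting) order_trans power_eq_if not_one_le_zero)
    have "g (w + \<nu>) * r ^ (2 ^ Suc m - 1) = (g (w + \<nu>) * r ^ (N - 1)) * r ^ N"
    proof -
      have "2 ^ Suc m - 1 = (N - 1) + N" using N1 by (simp add: N_def)
      then show ?thesis by (simp add: power_add mult_ac)
    qed
    also have "\<dots> \<le> norm (re (L \<nu> N)) * norm (re (L (\<zeta> * \<nu>) N))"
      using IH1 IH2' r by (intro mult_mono) (auto simp: g_def)
    also have "\<dots> = norm (re (L \<nu> (2 ^ Suc m)))"
      using L2[OF z, of \<nu>] by (simp add: N_def norm_mult)
    finally show ?case .
  qed
  have Mpos: "M > 0" using M by (smt (verit) norm_ge_zero)
  have NY: "Nc Y \<le> M"
  proof -
    have "Nc Y = norm (a - of_real (Re w)) + norm (of_real (Im w) :: 'k)"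
      by (simp add: Nc_def Y_def)
    also have "\<dots> \<le> norm a + \<bar>Re w\<bar> + \<bar>Im w\<bar>"
      using norm_triangle_ineq4[of a "of_real (Re w)"] by simp
    finally show ?thesis using M by simp
  qed
  have L4: "norm (re (L \<mu> N)) \<le> r ^ N + 4 * (cmod \<mu> * M) ^ N + 4 * ((cmod \<mu>)\<^sup>2) ^ N" for N
  proof -
    define P where "P = Y ^ N"
    define H :: "'k cx" where "H = hc (\<mu> ^ N)"
    have LL: "L \<mu> N = P * cj P - H * cj P - P * cj H + H * cj H"
      by (simp add: L_def D_def P_def H_def cj_diff algebra_simps)
    have "P * cj P = (Y * cj Y) ^ N" by (simp add: P_def cj_power power_mult_distrib)
    also have "\<dots> = Cx (qq a w ^ N) 0" unfolding cjY by (simp only: Y_def qq_factor real_power)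
    finally have e1: "Nc (P * cj P) = r ^ N" by (simp add: Nc_real norm_power r)
    have NH: "Nc H \<le> 2 * cmod \<mu> ^ N"
      using Nc_hc[of "\<mu> ^ N"] by (simp add: H_def norm_power)
    have NP: "Nc P \<le> M ^ N"
      using Nc_power[of Y N] power_mono[OF NY Nc_nonneg, of N] by (simp add: P_def)
    have e2: "Nc (H * cj P) \<le> 2 * (cmod \<mu> * M) ^ N"
    proof -
      have "Nc (H * cj P) \<le> Nc H * Nc P" using Nc_mult[of H "cj P"] by (simp add: Nc_cj)
      also have "\<dots> \<le> (2 * cmod \<mu> ^ N) * M ^ N"
        using NH NP by (intro mult_mono) (auto simp: Nc_nonneg Mpos less_imp_le)
      finally show ?thesis by (simp add: power_mult_distrib)
    qed
    have e3: "Nc (P * cj H) \<le> 2 * (cmod \<mu> * M) ^ N"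
    proof -
      have "Nc (P * cj H) \<le> Nc P * Nc H" using Nc_mult[of P "cj H"] by (simp add: Nc_cj)
      also have "\<dots> \<le> M ^ N * (2 * cmod \<mu> ^ N)"
        using NH NP by (intro mult_mono) (auto simp: Nc_nonneg Mpos less_imp_le)
      finally show ?thesis by (simp add: power_mult_distrib mult_ac)
    qed
    have e4: "Nc (H * cj H) \<le> 4 * ((cmod \<mu>)\<^sup>2) ^ N"
    proof -
      have "Nc (H * cj H) \<le> Nc H * Nc H" using Nc_mult[of H "cj H"] by (simp add: Nc_cj)
      also have "\<dots> \<le> (2 * cmod \<mu> ^ N) * (2 * cmod \<mu> ^ N)"
        using NH by (intro mult_mono) (auto simp: Nc_nonneg Mpos less_imp_le)
      finally show ?thesis by (simp add: power_mult_distrib power2_eq_square power_mult[symmetric])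
    qed
    have "norm (re (L \<mu> N)) \<le> Nc (L \<mu> N)" by (rule re_le_Nc)
    also have "\<dots> \<le> Nc (P * cj P) + Nc (H * cj P) + Nc (P * cj H) + Nc (H * cj H)"
      unfolding LL by (meson Nc_add Nc_diff add_mono order_trans order_refl)
    also have "\<dots> \<le> r ^ N + 4 * (cmod \<mu> * M) ^ N + 4 * ((cmod \<mu>)\<^sup>2) ^ N"
      using e1 e2 e3 e4 by simp
    finally show ?thesis .
  qed
  define t1 where "t1 = cmod \<mu> * M / r"
  define t2 where "t2 = (cmod \<mu>)\<^sup>2 / r"
  have t1: "0 \<le> t1" "t1 < 1" using mu2 r M by (auto simp: t1_def)
  have "(cmod \<mu>)\<^sup>2 < (sqrt r)\<^sup>2" using mu1 by (intro power_strict_mono) auto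
  then have t2: "0 \<le> t2" "t2 < 1" using r by (auto simp: t2_def)
  have bound: "g (w + \<mu>) \<le> r + 4 * r * t1 ^ (2 ^ m) + 4 * r * t2 ^ (2 ^ m)" for m
  proof -
    define N :: nat where "N = 2 ^ m"
    have N1: "N \<ge> 1" by (simp add: N_def)
    have "g (w + \<mu>) * r ^ (N - 1) \<le> r ^ N + 4 * (cmod \<mu> * M) ^ N + 4 * ((cmod \<mu>)\<^sup>2) ^ N"
      using L3[of \<mu> m] L4[of N] by (simp add: N_def)
    also have "\<dots> = (r + 4 * r * t1 ^ N + 4 * r * t2 ^ N) * r ^ (N - 1)"
    proof -
      have rN: "r ^ N = r * r ^ (N - 1)" using N1 by (metis Suc_diff_le diff_Suc_1 power_Suc)
      have "(cmod \<mu> * M) ^ N = t1 ^ N * r ^ N" using r by (simp add: t1_def power_divide)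
      moreover have "((cmod \<mu>)\<^sup>2) ^ N = t2 ^ N * r ^ N" using r by (simp add: t2_def power_divide)
      ultimately show ?thesis using rN by (simp add: algebra_simps)
    qed
    finally show ?thesis using r by (simp add: N_def)
  qed
  have lim: "(\<lambda>m. r + 4 * r * t1 ^ (2 ^ m) + 4 * r * t2 ^ (2 ^ m)) \<longlonglongrightarrow> r + 4 * r * 0 + 4 * r * 0"
  proof -
    have sm: "strict_mono (\<lambda>m::nat. (2::nat) ^ m)" by (rule strict_monoI) simp
    have "(\<lambda>m. t1 ^ (2 ^ m)) \<longlonglongrightarrow> 0"
      using LIMSEQ_subseq_LIMSEQ[OF LIMSEQ_power_zero[of t1] sm] t1 by (simp add: o_def)
    moreover have "(\<lambda>m. t2 ^ (2 ^ m)) \<longlonglongrightarrow> 0"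
      using LIMSEQ_subseq_LIMSEQ[OF LIMSEQ_power_zero[of t2] sm] t2 by (simp add: o_def)
    ultimately show ?thesis by (intro tendsto_intros)
  qed
  have "g (w + \<mu>) \<le> r"
    using LIMSEQ_le_const[OF lim] bound by simp
  then show ?thesis by (simp add: g_def)
qed




lemma mazur:
  fixes a :: "'k::real_normed_field"
  shows "\<exists>z. qq a z = 0"
proof (rule ccontr)
  assume H: "\<nexists>z. qq a z = 0"
  define g where "g = (\<lambda>z. norm (qq a z))"
  have cont: "continuous_on UNIV g" unfolding g_def qq_def by (intro continuous_intros)
  have coer: "g z \<ge> (cmod z)\<^sup>2 - 2 * cmod z * norm a - (norm a)\<^sup>2" for z
  proof -
    have e: "(of_real ((Re z)\<^sup>2 + (Im z)\<^sup>2) :: 'k) = qq a z - a * a + of_real (2 * Re z) * a"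
      by (simp add: qq_def)
    have "(cmod z)\<^sup>2 = norm (of_real ((Re z)\<^sup>2 + (Im z)\<^sup>2) :: 'k)"
      by (subst norm_of_real) (simp add: cmod_power2)
    also have "\<dots> \<le> norm (qq a z) + norm (a * a) + norm (of_real (2 * Re z) * a :: 'k)"
      unfolding e by (meson norm_triangle_ineq norm_triangle_ineq4 order_trans add_mono order_refl)
    also have "\<dots> \<le> g z + (norm a)\<^sup>2 + 2 * cmod z * norm a"
      using abs_Re_le_cmod[of z]
      by (simp add: g_def norm_mult power2_eq_square mult_right_mono)
    finally show ?thesis by simp
  qed
  define R where "R = 3 * norm a + g 0 + 1"
  have g0: "g 0 \<ge> 0" by (simp add: g_def)
  have far: "g z > g 0" if "cmod z > R" for z
  proof -
    define c where "c = cmod z"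
    have c: "c \<ge> 3 * norm a + g 0 + 1" using that by (simp add: c_def R_def)
    have nn: "c \<ge> 1" using c g0 norm_ge_zero[of a] by linarith
    have "c * (c - 2 * norm a) \<ge> c * (norm a + g 0 + 1)"
      using c g0 nn by (intro mult_left_mono) auto
    moreover have "c * (norm a + g 0 + 1) \<ge> 3 * norm a * norm a + (g 0 + 1)"
    proof -
      have "c * norm a \<ge> 3 * norm a * norm a" using c g0 nn by (intro mult_right_mono) auto
      moreover have "c * (g 0 + 1) \<ge> 1 * (g 0 + 1)" using c g0 nn by (intro mult_right_mono) auto
      ultimately show ?thesis by (simp add: algebra_simps)
    qed
    moreover have "norm a * norm a \<ge> 0" by simp
    ultimately have "c\<^sup>2 - 2 * c * norm a - (norm a)\<^sup>2 > g 0"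
      unfolding power2_eq_square by (simp only: algebra_simps)
    with coer[of z] show ?thesis by (simp add: c_def)
  qed
  have "R > 0" using g0 norm_ge_zero[of a] unfolding R_def by linarith
  obtain z0 where z0: "z0 \<in> cball 0 R" "\<forall>y\<in>cball 0 R. g z0 \<le> g y"
  proof -
    have "\<exists>x\<in>cball 0 R. \<forall>y\<in>cball 0 R. g x \<le> g y"
    proof (rule continuous_attains_inf[OF compact_cball])
      show "cball 0 R \<noteq> {}" using \<open>R > 0\<close> by simp
      show "continuous_on (cball 0 R) g" by (rule continuous_on_subset[OF cont]) simp
    qed
    then show ?thesis using that by blast
  qed
  have minz: "g z0 \<le> g z" for z
  proof (cases "cmod z \<le> R")
    case True then show ?thesis using z0 by simp
  next
    case False
    then have "g z > g 0" using far by simp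
    moreover have "g z0 \<le> g 0" using z0 \<open>R > 0\<close> by simp
    ultimately show ?thesis by simp
  qed
  define r where "r = g z0"
  have rpos: "r > 0" using H by (simp add: r_def g_def)
  define E where "E = {z. g z = r}"
  have cE: "closed E" unfolding E_def by (rule closed_Collect_eq[OF cont continuous_on_const])
  have oE: "open E"
    unfolding open_contains_ball
  proof
    fix w assume "w \<in> E"
    then have gw: "g w = r" by (simp add: E_def)
    define M where "M = norm a + \<bar>Re w\<bar> + \<bar>Im w\<bar> + 1"
    have Mpos: "M > 0" unfolding M_def by (smt (verit) norm_ge_zero)
    define \<delta> where "\<delta> = min (sqrt r) (r / M)"
    have "\<delta> > 0" using rpos Mpos by (simp add: \<delta>_def)
    moreover have "ball w \<delta> \<subseteq> E"
    proof
      fix z assume "z \<in> ball w \<delta>"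
      then have d: "cmod (z - w) < \<delta>" by (simp add: dist_norm norm_minus_commute)
      have m1: "cmod (z - w) < sqrt r" using d by (simp add: \<delta>_def)
      have "cmod (z - w) < r / M" using d by (simp add: \<delta>_def)
      then have m2: "cmod (z - w) * M < r" using Mpos by (simp add: pos_less_divide_eq)
      have "norm (qq a (w + (z - w))) \<le> r"
      proof (rule mazur_local[OF _ _ rpos M_def m1 m2])
        show "norm (qq a w) \<le> norm (qq a y)" for y
          using gw minz[of y] unfolding g_def r_def by simp
        show "r = norm (qq a w)" using gw unfolding g_def by simp
      qed
      then have "g z \<le> r" by (simp add: g_def)
      moreover have "g z \<ge> r" using minz by (simp add: r_def)
      ultimately show "z \<in> E" by (simp add: E_def)
    qed
    ultimately show "\<exists>e>0. ball w e \<subseteq> E" by blast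
  qed
  have conn: "connected (UNIV :: complex set)" by (simp add: convex_connected)
  have o2: "openin (top_of_set UNIV) E" using oE by (metis open_openin subtopology_UNIV)
  have c2: "closedin (top_of_set UNIV) E" using cE by (metis closed_closedin subtopology_UNIV)
  have "E = {} \<or> E = UNIV"
    using conn[unfolded connected_clopen] o2 c2 by blast
  moreover have "z0 \<in> E" by (simp add: E_def r_def)
  ultimately have EU: "E = UNIV" by auto
  define z1 :: complex where "z1 = of_real (R + 1)"
  have "cmod z1 > R" using \<open>R > 0\<close> by (simp add: z1_def)
  then have "g z1 > g 0" by (rule far)
  moreover have "g z1 = r" using EU by (auto simp: E_def)
  moreover have "r \<le> g 0" using minz by (simp add: r_def)
  ultimately show False by simp
qed




lemma K_cases:
  "(\<forall>b::'k::real_normed_field. \<exists>s. b = of_real s) \<or>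
   (\<exists>j::'k. j * j = -1 \<and> (\<forall>b. \<exists>s t. b = of_real s + of_real t * j))"
proof (cases "\<exists>(b::'k) z. qq b z = 0 \<and> Im z \<noteq> 0")
  case True
  then obtain b0 :: 'k and z0 where b0: "qq b0 z0 = 0" "Im z0 \<noteq> 0" by blast
  define j where "j = (b0 - of_real (Re z0)) / of_real (Im z0)"
  have sq: "(b - of_real (Re z)) * (b - of_real (Re z)) = - (of_real (Im z) * of_real (Im z))"
    if "qq b z = 0" for b :: 'k and z
    using that by (simp add: qq_def algebra_simps power2_eq_square)
  have jj: "j * j = -1"
    using sq[OF b0(1)] b0(2) by (simp add: j_def field_simps)
  have "\<exists>s t. b = of_real s + of_real t * j" for b
  proof -
    obtain z where z: "qq b z = 0" using mazur by blast
    define x :: 'k where "x = of_real (Re z)"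
    define y :: 'k where "y = of_real (Im z)"
    have s1: "(b - x) * (b - x) = - (y * y)"
      using sq[OF z] unfolding x_def y_def .
    have "(b - x - y * j) * (b - x + y * j) = (b - x) * (b - x) - (y * y) * (j * j)"
      by (simp add: algebra_simps)
    also have "\<dots> = 0" using s1 jj by simp
    finally have "(b - x - y * j) * (b - x + y * j) = 0" .
    then have z1: "b - x - y * j = 0 \<or> b - x + y * j = 0"
      by (simp only: mult_eq_0_iff)
    have a1: "b - x - y * j = b - (x + y * j)" by (simp add: algebra_simps)
    have a2: "b - x + y * j = b - (x + (- y) * j)" by (simp add: algebra_simps)
    have z2: "b - (x + y * j) = 0 \<or> b - (x + (- y) * j) = 0"
      using z1 unfolding a1 a2 .
    then have "b = x + y * j \<or> b = x + (- y) * j"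
      by (simp only: eq_iff_diff_eq_0[symmetric])
    then show ?thesis unfolding x_def y_def by (metis of_real_minus)
  qed
  with jj show ?thesis by blast
next
  case False
  have "\<exists>s. b = of_real s" for b :: 'k
  proof -
    obtain z where z: "qq b z = 0" using mazur by blast
    with False have "Im z = 0" by blast
    with z have "(b - of_real (Re z)) * (b - of_real (Re z)) = 0"
      by (simp add: qq_def algebra_simps power2_eq_square)
    then show ?thesis by auto
  qed
  then show ?thesis by blast
qed



lemma K_lower:
  fixes j :: "'k::real_normed_field"
  assumes jj: "j * j = -1"
  shows "\<bar>s\<bar> + \<bar>t\<bar> \<le> 2 * (1 + norm j) * norm (of_real s + of_real t * j :: 'k)"
proof -
  define x :: 'k where "x = of_real s + of_real t * j"
  have "x * (of_real s - of_real t * j) = of_real s * of_real s - of_real t * of_real t * (j * j)"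
    unfolding x_def by (simp add: algebra_simps)
  also have "\<dots> = of_real (s * s + t * t)" using jj by simp
  finally have p: "x * (of_real s - of_real t * j) = of_real (s * s + t * t)" .
  have "norm x * norm (of_real s - of_real t * j :: 'k) = norm (of_real (s * s + t * t) :: 'k)"
    unfolding p[symmetric] by (rule norm_mult[symmetric])
  also have "\<dots> = s * s + t * t" by (simp only: norm_of_real) (simp add: abs_of_nonneg)
  finally have n1: "norm x * norm (of_real s - of_real t * j :: 'k) = s * s + t * t" .
  have n2: "norm (of_real s - of_real t * j :: 'k) \<le> (1 + norm j) * (\<bar>s\<bar> + \<bar>t\<bar>)"
  proof -
    have "norm (of_real s - of_real t * j :: 'k) \<le> \<bar>s\<bar> + \<bar>t\<bar> * norm j"
      using norm_triangle_ineq4[of "of_real s :: 'k" "of_real t * j"] by (simp add: norm_mult)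
    also have "\<dots> \<le> (1 + norm j) * (\<bar>s\<bar> + \<bar>t\<bar>)"
      by (simp add: algebra_simps)
    finally show ?thesis .
  qed
  have sq: "(\<bar>s\<bar> + \<bar>t\<bar>) * (\<bar>s\<bar> + \<bar>t\<bar>) \<le> 2 * (s * s + t * t)"
  proof -
    have h: "0 \<le> (\<bar>s\<bar> - \<bar>t\<bar>) * (\<bar>s\<bar> - \<bar>t\<bar>)" by simp
    have e: "(\<bar>s\<bar> + \<bar>t\<bar>) * (\<bar>s\<bar> + \<bar>t\<bar>) =
      2 * (\<bar>s\<bar> * \<bar>s\<bar> + \<bar>t\<bar> * \<bar>t\<bar>) - (\<bar>s\<bar> - \<bar>t\<bar>) * (\<bar>s\<bar> - \<bar>t\<bar>)"
      by (simp add: algebra_simps)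
    show ?thesis unfolding e abs_mult_self_eq using h by linarith
  qed
  show ?thesis
  proof (cases "\<bar>s\<bar> + \<bar>t\<bar> = 0")
    case True then have "s = 0" "t = 0" by auto then show ?thesis by simp
  next
    case False
    then have pos: "\<bar>s\<bar> + \<bar>t\<bar> > 0" by simp
    have "(\<bar>s\<bar> + \<bar>t\<bar>) * (\<bar>s\<bar> + \<bar>t\<bar>) \<le> 2 * (norm x * norm (of_real s - of_real t * j :: 'k))"
      using sq n1 by simp
    also have "\<dots> \<le> 2 * (norm x * ((1 + norm j) * (\<bar>s\<bar> + \<bar>t\<bar>)))"
      using n2 by (intro mult_left_mono) auto
    also have "\<dots> = (2 * (1 + norm j) * norm x) * (\<bar>s\<bar> + \<bar>t\<bar>)"
      by (simp only: mult_ac)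
    finally have "(\<bar>s\<bar> + \<bar>t\<bar>) * (\<bar>s\<bar> + \<bar>t\<bar>) \<le> (2 * (1 + norm j) * norm x) * (\<bar>s\<bar> + \<bar>t\<bar>)" .
    then show ?thesis using pos unfolding x_def by (simp add: mult_le_cancel_right)
  qed
qed




lemma BW_K:
  fixes f :: "nat \<Rightarrow> 'k::real_normed_field"
  assumes B: "\<And>n. norm (f n) \<le> B"
  shows "\<exists>l r. strict_mono r \<and> (f \<circ> r) \<longlonglongrightarrow> l"
  using K_cases
proof
  assume H: "\<forall>b::'k. \<exists>s. b = of_real s"
  then have "\<forall>n. \<exists>s. f n = of_real s" by blast
  then obtain s where s: "\<forall>n. f n = of_real (s n)" using choice[of "\<lambda>n s. f n = of_real s"] by blast
  have "bounded (range s)"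
    unfolding bounded_iff
  proof (intro exI ballI)
    fix x assume "x \<in> range s"
    then obtain n where "x = s n" by blast
    then have "norm x = norm (f n)" using s by simp
    then show "norm x \<le> B" using B[of n] by simp
  qed
  then obtain l r where lr: "strict_mono r" "(s \<circ> r) \<longlonglongrightarrow> l"
    using bounded_imp_convergent_subsequence by blast
  have "(\<lambda>n. of_real ((s \<circ> r) n) :: 'k) \<longlonglongrightarrow> of_real l" by (rule tendsto_of_real) (rule lr(2))
  moreover have "(f \<circ> r) = (\<lambda>n. of_real ((s \<circ> r) n))" using s by (simp add: o_def)
  ultimately have "(f \<circ> r) \<longlonglongrightarrow> of_real l" by simp
  with lr(1) show ?thesis by blast
next
  assume "\<exists>j::'k. j * j = -1 \<and> (\<forall>b. \<exists>s t. b = of_real s + of_real t * j)"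
  then obtain j :: 'k where jj: "j * j = -1" and rep: "\<forall>b. \<exists>s t. b = of_real s + of_real t * j" by blast
  have "\<forall>n. \<exists>p. f n = of_real (fst p) + of_real (snd p) * j"
  proof
    fix n
    obtain s t where "f n = of_real s + of_real t * j" using rep by blast
    then show "\<exists>p. f n = of_real (fst p) + of_real (snd p) * j" by (intro exI[of _ "(s, t)"]) simp
  qed
  then obtain p where p: "\<forall>n. f n = of_real (fst (p n)) + of_real (snd (p n)) * j"
    using choice[of "\<lambda>n p. f n = of_real (fst p) + of_real (snd p) * j"] by blast
  define s where "s = (\<lambda>n. fst (p n))"
  define t where "t = (\<lambda>n. snd (p n))"
  have st: "\<And>n. f n = of_real (s n) + of_real (t n) * j" using p by (simp add: s_def t_def)
  have lb: "\<bar>s n\<bar> + \<bar>t n\<bar> \<le> 2 * (1 + norm j) * B" for n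
  proof -
    have c0: "0 \<le> 2 * (1 + norm j)" by simp
    have "\<bar>s n\<bar> + \<bar>t n\<bar> \<le> 2 * (1 + norm j) * norm (f n)"
      using K_lower[OF jj, of "s n" "t n"] st[of n] by simp
    also have "\<dots> \<le> 2 * (1 + norm j) * B" using B[of n] c0 by (rule mult_left_mono)
    finally show ?thesis .
  qed
  have bs: "bounded (range s)" unfolding bounded_iff
  proof (intro exI ballI)
    fix x assume "x \<in> range s"
    then obtain n where "x = s n" by blast
    then show "norm x \<le> 2 * (1 + norm j) * B" using lb[of n] by simp
  qed
  have bt: "bounded (range t)" unfolding bounded_iff
  proof (intro exI ballI)
    fix x assume "x \<in> range t"
    then obtain n where "x = t n" by blast
    then show "norm x \<le> 2 * (1 + norm j) * B" using lb[of n] by simp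
  qed
  have "range (\<lambda>n. (s n, t n)) \<subseteq> range s \<times> range t" by auto
  then have "bounded (range (\<lambda>n. (s n, t n)))"
    using bounded_Times[OF bs bt] bounded_subset by blast
  then obtain l r where r: "strict_mono r" "((\<lambda>n. (s n, t n)) \<circ> r) \<longlonglongrightarrow> l"
    using bounded_imp_convergent_subsequence by blast
  have "(\<lambda>n. s (r n)) \<longlonglongrightarrow> fst l" using tendsto_fst[OF r(2)] by (simp add: o_def)
  moreover have "(\<lambda>n. t (r n)) \<longlonglongrightarrow> snd l" using tendsto_snd[OF r(2)] by (simp add: o_def)
  ultimately have "(\<lambda>n. of_real (s (r n)) + of_real (t (r n)) * j) \<longlonglongrightarrow> of_real (fst l) + of_real (snd l) * j"
    by (intro tendsto_intros)
  then have "(f \<circ> r) \<longlonglongrightarrow> of_real (fst l) + of_real (snd l) * j" by (simp add: o_def st)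
  with r(1) show ?thesis by blast
qed




locale fsp =
  fixes s :: "'k::real_normed_field \<Rightarrow> 'a::{ab_group_add,topological_space} \<Rightarrow> 'a"
  assumes F: "F_space s"
begin

sublocale vs: vector_space s using F by (simp add: F_space_def)

lemma add_cont: "continuous_on UNIV (\<lambda>(x::'a, y::'a). x + y)" using F by (simp add: F_space_def)
lemma sm_cont: "continuous_on UNIV (\<lambda>(c::'k, x::'a). s c x)" using F by (simp add: F_space_def)
lemma met: "completely_metrizable_space (euclidean :: 'a topology)" using F by (simp add: F_space_def)

lemma T_add:
  assumes "(f \<longlongrightarrow> a) F" "(g \<longlongrightarrow> b) F"
  shows "((\<lambda>i. f i + g i :: 'a) \<longlongrightarrow> a + b) F"
proof -
  from continuous_on_tendsto_compose[OF add_cont tendsto_Pair[OF assms]] show ?thesis by simp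
qed

lemma T_sm:
  assumes "(c \<longlongrightarrow> c0) F" "(f \<longlongrightarrow> a) F"
  shows "((\<lambda>i. s (c i) (f i)) \<longlongrightarrow> s c0 a) F"
proof -
  from continuous_on_tendsto_compose[OF sm_cont tendsto_Pair[OF assms]] show ?thesis by simp
qed

lemma neg_eq: "- x = s (- 1) x" by simp

lemma T_neg:
  assumes "(f \<longlongrightarrow> a) F"
  shows "((\<lambda>i. - f i :: 'a) \<longlongrightarrow> - a) F"
  using T_sm[OF tendsto_const assms, of "- 1"] by simp

lemma T_diff:
  assumes "(f \<longlongrightarrow> a) F" "(g \<longlongrightarrow> b) F"
  shows "((\<lambda>i. f i - g i :: 'a) \<longlongrightarrow> a - b) F"
  using T_add[OF assms(1) T_neg[OF assms(2)]] by simp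

lemma haus: "Hausdorff_space (euclidean :: 'a topology)"
  using met completely_metrizable_imp_metrizable_space metrizable_imp_Hausdorff_space by blast

lemma lim_unique:
  assumes "(f \<longlongrightarrow> a) sequentially" "(f \<longlongrightarrow> b) sequentially"
  shows "a = (b::'a)"
proof -
  have l1: "limitin euclidean f a sequentially" using assms(1) by (simp only: limitin_canonical_iff)
  have l2: "limitin euclidean f b sequentially" using assms(2) by (simp only: limitin_canonical_iff)
  show ?thesis by (rule limitin_Hausdorff_unique[OF l1 l2 trivial_limit_sequentially haus])
qed

lemma closed_zero: "closed {0::'a}"
  unfolding closed_closedin by (rule closedin_Hausdorff_singleton[OF haus]) simp

lemma seq_closure:
  assumes "y \<in> closure S"
  shows "\<exists>\<sigma>. (\<forall>n. \<sigma> n \<in> S) \<and> (\<sigma> \<longlongrightarrow> (y::'a)) sequentially"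
proof -
  have "metrizable_space (euclidean :: 'a topology)"
    using met completely_metrizable_imp_metrizable_space by blast
  then obtain M d where Md: "Metric_space M d" "(euclidean :: 'a topology) = Metric_space.mtopology M d"
    unfolding metrizable_space_def by blast
  have "y \<in> Metric_space.mtopology M d closure_of S" using assms unfolding Md(2)[symmetric] by simp
  then obtain \<sigma> where s1: "range \<sigma> \<subseteq> S \<inter> M" and s2: "limitin (Metric_space.mtopology M d) \<sigma> y sequentially"
    using Metric_space.closure_of_sequentially[OF Md(1)] by blast
  have "limitin euclidean \<sigma> y sequentially" using s2 unfolding Md(2)[symmetric] .
  then have "(\<sigma> \<longlongrightarrow> y) sequentially" by simp
  moreover have "\<forall>n. \<sigma> n \<in> S" using s1 by auto
  ultimately show ?thesis by blast
qed

end




context fsp begin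

lemma ext_closed:
  assumes cW: "closed W" and sW: "vs.subspace W" and xW: "x \<notin> W"
  shows "closed {w + s c x | w c. w \<in> W}"
proof -
  define V where "V = {w + s c x | w c. w \<in> W}"
  have "closure V \<subseteq> V"
  proof
    fix y assume "y \<in> closure V"
    then obtain \<sigma> where \<sigma>: "\<forall>n. \<sigma> n \<in> V" "\<sigma> \<longlonglongrightarrow> y" using seq_closure by blast
    have "\<forall>n. \<exists>p. fst p \<in> W \<and> \<sigma> n = fst p + s (snd p) x"
    proof
      fix n
      obtain w c where "w \<in> W" "\<sigma> n = w + s c x" using \<sigma>(1)[rule_format, of n] by (auto simp: V_def)
      then show "\<exists>p. fst p \<in> W \<and> \<sigma> n = fst p + s (snd p) x" by (intro exI[of _ "(w, c)"]) simp
    qed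
    then obtain p where p: "\<forall>n. fst (p n) \<in> W \<and> \<sigma> n = fst (p n) + s (snd (p n)) x"
      using choice[of "\<lambda>n p. fst p \<in> W \<and> \<sigma> n = fst p + s (snd p) x"] by blast
    define w where "w = (\<lambda>n. fst (p n))"
    define c where "c = (\<lambda>n. snd (p n))"
    have wc: "\<And>n. w n \<in> W" "\<And>n. \<sigma> n = w n + s (c n) x" using p by (auto simp: w_def c_def)
    define e where "e = (\<lambda>n. 1 / (1 + norm (c n)))"
    have epos: "e n > 0" for n by (simp add: e_def add_pos_nonneg)
    define d :: "nat \<Rightarrow> 'k" where "d = (\<lambda>n. of_real (e n))"
    define c' where "c' = (\<lambda>n. d n * c n)"
    have nd: "norm (d n) = e n" for n using epos[of n] by (simp add: d_def)
    have nc': "norm (c' n) = e n * norm (c n)" for n by (simp add: c'_def norm_mult nd)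
    have sum1: "norm (c' n) + norm (d n) = 1" for n
    proof -
      have "1 + norm (c n) > 0" by (simp add: add_pos_nonneg)
      then show ?thesis by (simp add: nc' nd e_def field_simps)
    qed
    have bc': "norm (c' n) \<le> 1" for n using sum1[of n] norm_ge_zero[of "d n"] by linarith
    have bd: "norm (d n) \<le> 1" for n using sum1[of n] norm_ge_zero[of "c' n"] by linarith
    obtain \<gamma> r1 where r1: "strict_mono r1" "(c' \<circ> r1) \<longlonglongrightarrow> \<gamma>" using BW_K[of c' 1] bc' by blast
    obtain \<delta> r2 where r2: "strict_mono r2" "((d \<circ> r1) \<circ> r2) \<longlonglongrightarrow> \<delta>" using BW_K[of "d \<circ> r1" 1] bd by auto
    define r where "r = r1 \<circ> r2"
    have r: "strict_mono r" using r1(1) r2(1) by (simp add: r_def strict_mono_o)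
    have lc': "(\<lambda>n. c' (r n)) \<longlonglongrightarrow> \<gamma>"
      using LIMSEQ_subseq_LIMSEQ[OF r1(2) r2(1)] by (simp add: r_def o_def)
    have ld: "(\<lambda>n. d (r n)) \<longlonglongrightarrow> \<delta>" using r2(2) by (simp add: r_def o_def)
    have l\<sigma>: "(\<lambda>n. \<sigma> (r n)) \<longlonglongrightarrow> y" using LIMSEQ_subseq_LIMSEQ[OF \<sigma>(2) r] by (simp add: o_def)
    have "(\<lambda>n. norm (c' (r n)) + norm (d (r n))) \<longlonglongrightarrow> norm \<gamma> + norm \<delta>"
      by (intro tendsto_intros lc' ld)
    moreover have "(\<lambda>n. norm (c' (r n)) + norm (d (r n))) = (\<lambda>n. 1)" using sum1 by (rule ext)
    ultimately have "(\<lambda>n. 1::real) \<longlonglongrightarrow> norm \<gamma> + norm \<delta>" by simp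
    then have gd: "norm \<gamma> + norm \<delta> = 1" using LIMSEQ_unique[OF tendsto_const] by metis
    have eq: "s (d (r n)) (w (r n)) = s (d (r n)) (\<sigma> (r n)) - s (c' (r n)) x" for n
      by (simp add: wc(2) c'_def vs.scale_right_distrib)
    have lw: "(\<lambda>n. s (d (r n)) (w (r n))) \<longlonglongrightarrow> s \<delta> y - s \<gamma> x"
      unfolding eq by (intro T_diff T_sm ld l\<sigma> lc' tendsto_const)
    have aw: "\<forall>n. s (d (r n)) (w (r n)) \<in> W" using sW wc(1) by (simp add: vs.subspace_def)
    have inW: "s \<delta> y - s \<gamma> x \<in> W"
      by (rule Lim_in_closed_set[OF cW always_eventually[OF aw] trivial_limit_sequentially lw])
    show "y \<in> V"
    proof (cases "\<delta> = 0")
      case True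
      then have "norm \<gamma> = 1" using gd by simp
      then have g0: "\<gamma> \<noteq> 0" by auto
      have "- s \<gamma> x \<in> W" using inW True by simp
      then have "s (- inverse \<gamma>) (- s \<gamma> x) \<in> W" using sW unfolding vs.subspace_def by blast
      moreover have "s (- inverse \<gamma>) (- s \<gamma> x) = x" using g0 by simp
      ultimately have "x \<in> W" by simp
      with xW show ?thesis by blast
    next
      case False
      have "s (inverse \<delta>) (s \<delta> y - s \<gamma> x) \<in> W" using sW inW unfolding vs.subspace_def by blast
      moreover have "s (inverse \<delta>) (s \<delta> y - s \<gamma> x) = y - s (inverse \<delta> * \<gamma>) x"
        using False by (simp add: vs.scale_right_diff_distrib)
      ultimately have "y - s (inverse \<delta> * \<gamma>) x \<in> W" by simp
      then have "y = (y - s (inverse \<delta> * \<gamma>) x) + s (inverse \<delta> * \<gamma>) x \<and> y - s (inverse \<delta> * \<gamma>) x \<in> W"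
        by simp
      then show ?thesis unfolding V_def by blast
    qed
  qed
  then show ?thesis unfolding V_def[symmetric] by (simp add: closure_subset_eq)
qed

lemma span_closed:
  assumes "finite B"
  shows "closed (vs.span B)"
  using assms
proof (induction B rule: finite_induct)
  case empty
  then show ?case using closed_zero by simp
next
  case (insert b B)
  show ?case
  proof (cases "b \<in> vs.span B")
    case True
    then show ?thesis using insert.IH by (simp add: vs.span_redundant)
  next
    case False
    have "vs.span (insert b B) = {w + s c b | w c. w \<in> vs.span B}"
    proof -
      have "vs.span (insert b B) = {x. \<exists>k. x - s k b \<in> vs.span B}" by (rule vs.span_insert)
      also have "\<dots> = {w + s c b | w c. w \<in> vs.span B}"
      proof (rule set_eqI, rule iffI)
        fix x assume "x \<in> {x. \<exists>k. x - s k b \<in> vs.span B}"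
        then obtain k where "x - s k b \<in> vs.span B" by blast
        moreover have "x = (x - s k b) + s k b" by simp
        ultimately show "x \<in> {w + s c b | w c. w \<in> vs.span B}" by blast
      next
        fix x assume "x \<in> {w + s c b | w c. w \<in> vs.span B}"
        then obtain w c where "w \<in> vs.span B" "x = w + s c b" by blast
        then have "x - s c b \<in> vs.span B" by simp
        then show "x \<in> {x. \<exists>k. x - s k b \<in> vs.span B}" by blast
      qed
      finally show ?thesis .
    qed
    then show ?thesis using ext_closed[OF insert.IH vs.subspace_span False] by simp
  qed
qed

end




theorem mainTheorem4:
  fixes smult_op :: "'k::real_normed_field \<Rightarrow> 'a::{ab_group_add,topological_space} \<Rightarrow> 'a"
    and T :: "'a \<Rightarrow> 'a"
  assumes "F_space smult_op"
    and "separable_space (euclidean :: 'a topology)"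
    and "\<not> (\<exists>B. finite B \<and> module.span smult_op B = UNIV)"
    and "Vector_Spaces.linear smult_op smult_op T"
    and "continuous_on UNIV T"
    and "quasi_rigid T"
  shows "\<exists>V. module.subspace smult_op V \<and> closure V = UNIV \<and>
             \<not> (\<exists>B. finite B \<and> module.span smult_op B = V) \<and> V \<subseteq> Rec T"
proof -
  interpret fsp smult_op by (rule fsp.intro) (rule assms(1))
  obtain n Y where nY: "strict_mono n" "\<forall>k. n k \<ge> 1" "closure Y = UNIV"
    "\<forall>x\<in>Y. ((\<lambda>k. (T ^^ n k) x) \<longlongrightarrow> x) sequentially"
    using assms(6) unfolding quasi_rigid_def by blast
  have L: "(\<forall>x y. T (x + y) = T x + T y) \<and> (\<forall>c x. T (smult_op c x) = smult_op c (T x))"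
    using assms(4) unfolding Vector_Spaces.linear_iff by blast
  have Tadd: "T (x + y) = T x + T y" for x y using L by blast
  have Tsc: "T (smult_op c x) = smult_op c (T x)" for c x using L by blast
  have T0: "T 0 = 0" using Tsc[of 0 0] by simp
  have Iadd: "(T ^^ m) (x + y) = (T ^^ m) x + (T ^^ m) y" for m x y
    by (induction m) (simp_all add: Tadd)
  have Isc: "(T ^^ m) (smult_op c x) = smult_op c ((T ^^ m) x)" for m c x
    by (induction m) (simp_all add: Tsc)
  have I0: "(T ^^ m) 0 = 0" for m
    by (induction m) (simp_all add: T0)
  define S where "S = {x. ((\<lambda>k. (T ^^ n k) x) \<longlongrightarrow> x) sequentially}"
  have sub: "vs.subspace S"
    unfolding vs.subspace_def
  proof (intro conjI ballI allI)
    show "0 \<in> S" by (simp add: S_def I0)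
  next
    fix x y assume "x \<in> S" "y \<in> S"
    then show "x + y \<in> S" unfolding S_def by (simp add: Iadd T_add)
  next
    fix c x assume "x \<in> S"
    then show "smult_op c x \<in> S" unfolding S_def by (simp add: Isc T_sm[OF tendsto_const])
  qed
  have YS: "Y \<subseteq> S" using nY(4) by (auto simp: S_def)
  have dense: "closure S = UNIV" using closure_mono[OF YS] nY(3) by auto
  have nfin: "\<not> (\<exists>B. finite B \<and> vs.span B = S)"
  proof
    assume "\<exists>B. finite B \<and> vs.span B = S"
    then obtain B where B: "finite B" "vs.span B = S" by blast
    then have "closed S" using span_closed by blast
    then have "closure S = S" by (rule closure_closed)
    then have "S = UNIV" using dense by simp
    then show False using assms(3) B by blast
  qed
  have rec: "S \<subseteq> Rec T"
  proof
    fix x assume "x \<in> S"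
    then have lim: "((\<lambda>k. (T ^^ n k) x) \<longlongrightarrow> x) sequentially" by (simp add: S_def)
    define A where "A = {(T ^^ m) x | m. m \<ge> 1}"
    have inA: "(T ^^ n k) x \<in> closure A" for k
    proof -
      have "(T ^^ n k) x = (T ^^ n k) x \<and> n k \<ge> 1" using nY(2) by simp
      then have "(T ^^ n k) x \<in> A" unfolding A_def by blast
      then show ?thesis using closure_subset by blast
    qed
    have ev: "eventually (\<lambda>k. (T ^^ n k) x \<in> closure A) sequentially"
      using inA by (simp add: always_eventually)
    have "x \<in> closure A"
      by (rule Lim_in_closed_set[OF closed_closure ev trivial_limit_sequentially lim])
    then show "x \<in> Rec T" by (simp add: Rec_def A_def)
  qed
  show ?thesis by (rule exI[of _ S]) (intro conjI sub dense nfin rec)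
qed



end
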